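(* Let $\alpha\in(0,1)$ and let $(X_1,Y_1),\dots,(X_n,Y_n),(X_{n+1},Y_{n+1})$ be exchangeable random pairs in $\mathcal{X}\times\mathbb{R}$. Split the indices into a training set $\{1,\dots,n_0\}$ and a calibration set $\{n_0+1,\dots,n\}$ with $n_1=n-n_0\ge 1$. Suppose a family of prediction bands $\{[\hat q_{\mathrm{lo}}(x,t),\hat q_{\mathrm{hi}}(x,t)]\}_{t\in\mathcal{T}}$ is constructed by either of the two methods below (UACQR-S or UACQR-P) and define $$\hat t=\inf\Big\{t\in\mathcal{T}:\ \sum_{i=n_0+1}^{n}\mathbf{1}\{\hat q_{\mathrm{lo}}(X_i,t)\le Y_i\le \hat q_{\mathrm{hi}}(X_i,t)\}\ \ge (1-\alpha)(n_1+1)\Big\},$$ and $\hat C_n(X_{n+1})=[\hat q_{\mathrm{lo}}(X_{n+1},\hat t),\hat q_{\mathrm{hi}}(X_{n+1},\hat t)]$ (with $\hat C_n(X_{n+1})=\mathbb{R}$ if the set over which the infimum is taken is empty). UACQR-S: $\mathcal{T}=\mathbb{R}$ and $$\hat q_{\mathrm{lo}}(x,t)=\hat q_{Y\mid X}(x,\alpha_{\mathrm{lo}})-t\,\hat g_{\mathrm{lo}}(x),\qquad \hat q_{\mathrm{hi}}(x,t)=\hat q_{Y\mid X}(x,\alpha_{\mathrm{hi}})+t\,\hat g_{\mathrm{hi}}(x),$$ where $\hat q_{Y\mid X}(\cdot,\alpha_{\mathrm{lo}}),\hat q_{Y\mid X}(\cdot,\alpha_{\mathrm{hi}}):\mathcal{X}\to\mathbb{R}$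 are any functions and $\hat g_{\mathrm{lo}},\hat g_{\mathrm{hi}}:\mathcal{X}\to(0,\infty)$ are any strictly positive functions, all fitted using only the training data $\{(X_i,Y_i)\}_{i\le n_0}$ (and possibly independent auxiliary randomness). UACQR-P: given functions $\hat q^b_{Y\mid X}(\cdot,a):\mathcal{X}\to\mathbb{R}$ for $b=1,\dots,B$ and $a\in\{\alpha_{\mathrm{lo}},\alpha_{\mathrm{hi}}\}$, fitted using only the training data (and possibly independent auxiliary randomness), let $\hat q^{(1)}_{Y\mid X}(x,a)\le\dots\le\hat q^{(B)}_{Y\mid X}(x,a)$ be their order statistics at each $x$, set $\hat q^{(0)}_{Y\mid X}(x,a)=-\infty$, $\hat q^{(B+1)}_{Y\mid X}(x,a)=+\infty$, take $\mathcal{T}=\{0,1,\dots,B+1\}$ and $$\hat q_{\mathrm{lo}}(x,t)=\hat q^{(B+1-t)}_{Y\mid X}(x,\alpha_{\mathrm{lo}}),\qquad \hat q_{\mathrm{hi}}(x,t)=\hat q^{(t)}_{Y\mid X}(x,\alpha_{\mathrm{hi}}).$$ Then in both cases $\mathbb{P}\{Y_{n+1}\in\hat C_n(X_{n+1})\}\ge 1-\alpha$.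
   Context: $\alpha_{\mathrm{lo}},\alpha_{\mathrm{hi}}\in(0,1)$ are fixed target quantile levels (e.g. $\alpha/2$ and $1-\alpha/2$); the fitted functions are interpreted as estimates of conditional quantiles of $Y$ given $X$ (and $\hat g$ as estimates of their standard deviation), but no accuracy property is assumed. An interval $[a,b]$ with $a>b$ is empty, and an interval with endpoints $-\infty,+\infty$ is $\mathbb{R}$. Probability is over the joint draw of all $n+1$ data points and any auxiliary randomness. *)

theory Defs
  imports "HOL-Probability.Probability" "HOL-Combinatorics.Permutations"
begin

definition cov_count ::
  "('x \<Rightarrow> 't \<Rightarrow> ereal) \<Rightarrow> ('x \<Rightarrow> 't \<Rightarrow> ereal) \<Rightarrow> nat \<Rightarrow> nat
     \<Rightarrow> (nat \<Rightarrow> 'x) \<Rightarrow> (nat \<Rightarrow> real) \<Rightarrow> 't \<Rightarrow> nat" where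
  "cov_count lo hi n0 n xs ys t =
     card {i \<in> {n0<..n}. lo (xs i) t \<le> ereal (ys i) \<and> ereal (ys i) \<le> hi (xs i) t}"

definition conf_set ::
  "'t::conditionally_complete_linorder set \<Rightarrow> ('x \<Rightarrow> 't \<Rightarrow> ereal) \<Rightarrow> ('x \<Rightarrow> 't \<Rightarrow> ereal)
     \<Rightarrow> nat \<Rightarrow> nat \<Rightarrow> real \<Rightarrow> (nat \<Rightarrow> 'x) \<Rightarrow> (nat \<Rightarrow> real) \<Rightarrow> 'x \<Rightarrow> real set" where
  "conf_set T lo hi n0 n \<alpha> xs ys x =
     (let S = {t \<in> T. real (cov_count lo hi n0 n xs ys t) \<ge> (1 - \<alpha>) * (real (n - n0) + 1)}
      in if S = {} then UNIV
         else {y. lo x (Inf S) \<le> ereal y \<and> ereal y \<le> hi x (Inf S)})"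

definition uacqrS_set ::
  "('x \<Rightarrow> real) \<Rightarrow> ('x \<Rightarrow> real) \<Rightarrow> ('x \<Rightarrow> real) \<Rightarrow> ('x \<Rightarrow> real)
     \<Rightarrow> nat \<Rightarrow> nat \<Rightarrow> real \<Rightarrow> (nat \<Rightarrow> 'x) \<Rightarrow> (nat \<Rightarrow> real) \<Rightarrow> 'x \<Rightarrow> real set" where
  "uacqrS_set qlo qhi glo ghi n0 n \<alpha> xs ys x =
     conf_set (UNIV :: real set)
       (\<lambda>x t. ereal (qlo x - t * glo x)) (\<lambda>x t. ereal (qhi x + t * ghi x)) n0 n \<alpha> xs ys x"

definition ord_stat :: "nat \<Rightarrow> (nat \<Rightarrow> real) \<Rightarrow> nat \<Rightarrow> ereal" where
  "ord_stat B v k =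
     (if k = 0 then -\<infinity> else if k \<ge> B + 1 then \<infinity>
      else ereal (sort (map v [1..<B+1]) ! (k - 1)))"

definition uacqrP_set ::
  "nat \<Rightarrow> (nat \<Rightarrow> 'x \<Rightarrow> real) \<Rightarrow> (nat \<Rightarrow> 'x \<Rightarrow> real)
     \<Rightarrow> nat \<Rightarrow> nat \<Rightarrow> real \<Rightarrow> (nat \<Rightarrow> 'x) \<Rightarrow> (nat \<Rightarrow> real) \<Rightarrow> 'x \<Rightarrow> real set" where
  "uacqrP_set B qblo qbhi n0 n \<alpha> xs ys x =
     conf_set ({0..B+1} :: nat set)
       (\<lambda>x t. ord_stat B (\<lambda>b. qblo b x) (B + 1 - t))
       (\<lambda>x t. ord_stat B (\<lambda>b. qbhi b x) t) n0 n \<alpha> xs ys x"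

end

theory Submission
  imports Defs
begin


lemma count_bound:
  fixes s :: "nat \<Rightarrow> real" and k :: real
  assumes fin: "finite J" and k: "0 < k" "k \<le> real (card J)"
  shows "real (card {j\<in>J. k \<le> real (card {i\<in>J. s i < s j})}) \<le> real (card J) - k"
proof (cases "{j\<in>J. k \<le> real (card {i\<in>J. s i < s j})} = {}")
  case True then show ?thesis using k unfolding True by simp
next
  case False
  define A where "A = {j\<in>J. k \<le> real (card {i\<in>J. s i < s j})}"
  have finA: "finite A" using fin unfolding A_def by simp
  have "A \<noteq> {}" using False A_def by simp
  have "Min (s ` A) \<in> s ` A" using finA \<open>A \<noteq> {}\<close> by simp
  then obtain j0 where j0m: "s j0 = Min (s ` A)" and j0A: "j0 \<in> A"
  proof (rule imageE)
    fix j assume "Min (s ` A) = s j" "j \<in> A"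
    then show thesis by (intro that) auto
  qed
  have j0: "j0 \<in> A" "\<forall>j\<in>A. s j0 \<le> s j" using j0A j0m finA by auto
  define Bs where "Bs = {i\<in>J. s i < s j0}"
  have kB: "k \<le> real (card Bs)" using j0(1) unfolding A_def Bs_def by simp
  have disj: "A \<inter> Bs = {}" using j0(2) unfolding Bs_def by force
  have sub: "A \<union> Bs \<subseteq> J" unfolding A_def Bs_def by auto
  have "card A + card Bs \<le> card J"
    using card_Un_disjoint[OF finA _ disj] card_mono[OF fin sub] fin unfolding Bs_def by simp
  then have "real (card A) + real (card Bs) \<le> real (card J)" by linarith
  then show ?thesis using kB unfolding A_def by linarith
qed

lemma conf_char:
  fixes T :: "'t::conditionally_complete_linorder set"
    and sc :: "'x \<Rightarrow> real \<Rightarrow> 't"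
  assumes cov: "\<And>x y t. t \<in> T \<Longrightarrow> (lo x t \<le> ereal y \<and> ereal y \<le> hi x t) \<longleftrightarrow> sc x y \<le> t"
    and scT: "\<And>x y. sc x y \<in> T"
    and InfT: "\<And>S. S \<subseteq> T \<Longrightarrow> S \<noteq> {} \<Longrightarrow> bdd_below S \<Longrightarrow> Inf S \<in> T"
    and cal: "n0 < n" and al: "\<alpha> < 1"
  shows "y \<in> conf_set T lo hi n0 n \<alpha> xs ys x \<longleftrightarrow>
     real (card {i\<in>{n0<..n}. sc (xs i) (ys i) < sc x y}) < (1-\<alpha>)*(real(n-n0)+1)"
proof -
  define K where "K = (1-\<alpha>)*(real(n-n0)+1)"
  have Kpos: "0 < K" unfolding K_def using al by simp
  define C where "C = {n0<..n}"
  have finC: "finite C" unfolding C_def by simp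
  have Cne: "C \<noteq> {}" unfolding C_def using cal by auto
  define s where "s = sc x y"
  have cc: "cov_count lo hi n0 n xs ys t = card {i\<in>C. sc (xs i) (ys i) \<le> t}" if "t \<in> T" for t
    unfolding cov_count_def C_def using cov[OF that] by simp
  define S where "S = {t\<in>T. K \<le> real (card {i\<in>C. sc (xs i) (ys i) \<le> t})}"
  have S_eq: "{t \<in> T. real (cov_count lo hi n0 n xs ys t) \<ge> (1 - \<alpha>) * (real (n - n0) + 1)} = S"
    unfolding S_def K_def using cc by auto
  have cs: "conf_set T lo hi n0 n \<alpha> xs ys x =
      (if S = {} then UNIV else {y. lo x (Inf S) \<le> ereal y \<and> ereal y \<le> hi x (Inf S)})"
    unfolding conf_set_def Let_def S_eq by simp
  have bdd: "bdd_below S"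
  proof (rule bdd_belowI)
    fix t assume "t \<in> S"
    then have "0 < real (card {i\<in>C. sc (xs i) (ys i) \<le> t})" unfolding S_def using Kpos by auto
    then obtain i where i: "i \<in> C" "sc (xs i) (ys i) \<le> t"
      by (metis (mono_tags, lifting) card.empty empty_Collect_eq of_nat_0 order_less_irrefl)
    have "Min ((\<lambda>i. sc (xs i) (ys i)) ` C) \<le> sc (xs i) (ys i)" using finC i(1) by simp
    then show "Min ((\<lambda>i. sc (xs i) (ys i)) ` C) \<le> t" using i(2) by simp
  qed
  define F where "F = {i\<in>C. sc (xs i) (ys i) < s}"
  have finF: "finite F" unfolding F_def using finC by simp
  show ?thesis
  proof
    assume yin: "y \<in> conf_set T lo hi n0 n \<alpha> xs ys x"
    show "real (card {i\<in>{n0<..n}. sc (xs i) (ys i) < sc x y}) < (1-\<alpha>)*(real(n-n0)+1)"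
    proof (rule ccontr)
      assume "\<not> ?thesis"
      then have KF: "K \<le> real (card F)" unfolding K_def F_def C_def s_def by simp
      then have "F \<noteq> {}" using Kpos by auto
      define t0 where "t0 = Max ((\<lambda>i. sc (xs i) (ys i)) ` F)"
      have "t0 \<in> (\<lambda>i. sc (xs i) (ys i)) ` F" unfolding t0_def using finF \<open>F \<noteq> {}\<close> by simp
      then obtain i0 where i0a: "t0 = sc (xs i0) (ys i0)" "i0 \<in> F"
      proof (rule imageE)
        fix j assume "t0 = sc (xs j) (ys j)" "j \<in> F"
        then show thesis by (intro that) auto
      qed
      have i0: "i0 \<in> F" "t0 = sc (xs i0) (ys i0)" using i0a by auto
      have t0T: "t0 \<in> T" using i0 scT by simp
      have t0s: "t0 < s" using i0 unfolding F_def by simp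
      have "F \<subseteq> {i\<in>C. sc (xs i) (ys i) \<le> t0}" unfolding t0_def using finF F_def by auto
      then have "card F \<le> card {i\<in>C. sc (xs i) (ys i) \<le> t0}" using finC by (intro card_mono) auto
      then have "t0 \<in> S" unfolding S_def using KF t0T by simp
      then have Sne: "S \<noteq> {}" by auto
      have "Inf S \<le> t0" using \<open>t0 \<in> S\<close> bdd by (rule cInf_lower)
      have IT: "Inf S \<in> T" using InfT[OF _ Sne bdd] S_def by auto
      have "lo x (Inf S) \<le> ereal y \<and> ereal y \<le> hi x (Inf S)" using yin cs Sne by simp
      then have "s \<le> Inf S" using cov[OF IT] s_def by simp
      then show False using \<open>Inf S \<le> t0\<close> t0s by simp
    qed
  next
    assume lt: "real (card {i\<in>{n0<..n}. sc (xs i) (ys i) < sc x y}) < (1-\<alpha>)*(real(n-n0)+1)"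
    then have FK: "real (card F) < K" unfolding K_def F_def C_def s_def by simp
    show "y \<in> conf_set T lo hi n0 n \<alpha> xs ys x"
    proof (cases "S = {}")
      case True then show ?thesis using cs by simp
    next
      case Sne: False
      have "s \<le> Inf S"
      proof (rule cInf_greatest[OF Sne])
        fix t assume tS: "t \<in> S"
        show "s \<le> t"
        proof (rule ccontr)
          assume "\<not> s \<le> t"
          then have "t < s" by simp
          then have "{i\<in>C. sc (xs i) (ys i) \<le> t} \<subseteq> F" unfolding F_def by auto
          then have "card {i\<in>C. sc (xs i) (ys i) \<le> t} \<le> card F" using finF by (rule card_mono[rotated])
          then show False using tS FK unfolding S_def by simp
        qed
      qed
      moreover have IT: "Inf S \<in> T" using InfT[OF _ Sne bdd] S_def by auto
      ultimately have "lo x (Inf S) \<le> ereal y \<and> ereal y \<le> hi x (Inf S)" using cov[OF IT] s_def by simp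
      then show ?thesis using cs Sne by simp
    qed
  qed
qed



lemma sorted_nth_le_iff:
  fixes xs :: "real list"
  assumes "sorted xs" "k < length xs"
  shows "xs!k \<le> y \<longleftrightarrow> Suc k \<le> card {i. i < length xs \<and> xs!i \<le> y}"
proof
  assume h: "xs!k \<le> y"
  have "xs!i \<le> y" if "i < Suc k" for i
    using sorted_nth_mono[OF assms(1), of i k] that assms(2) h by simp
  then have sub: "{0..<Suc k} \<subseteq> {i. i < length xs \<and> xs!i \<le> y}"
    using assms(2) by auto
  show "Suc k \<le> card {i. i < length xs \<and> xs!i \<le> y}"
    using card_mono[OF _ sub] by simp
next
  assume h: "Suc k \<le> card {i. i < length xs \<and> xs!i \<le> y}"
  show "xs!k \<le> y"
  proof (rule ccontr)
    assume a: "\<not> xs!k \<le> y"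
    have "i < k" if "i < length xs" "xs!i \<le> y" for i
    proof (rule ccontr)
      assume "\<not> i < k"
      then have "xs!k \<le> xs!i" using sorted_nth_mono[OF assms(1), of k i] that by simp
      then show False using a that by simp
    qed
    then have sub: "{i. i < length xs \<and> xs!i \<le> y} \<subseteq> {0..<k}" by auto
    have "card {i. i < length xs \<and> xs!i \<le> y} \<le> k"
      using card_mono[OF _ sub] by simp
    then show False using h by simp
  qed
qed

lemma sorted_nth_ge_iff:
  fixes xs :: "real list"
  assumes "sorted xs" "k < length xs"
  shows "y \<le> xs!k \<longleftrightarrow> card {i. i < length xs \<and> xs!i < y} \<le> k"
proof
  assume h: "y \<le> xs!k"
  have "i < k" if "i < length xs" "xs!i < y" for i
  proof (rule ccontr)
    assume "\<not> i < k"
    then have "xs!k \<le> xs!i" using sorted_nth_mono[OF assms(1), of k i] that by simp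
    then show False using h that by simp
  qed
  then have sub: "{i. i < length xs \<and> xs!i < y} \<subseteq> {0..<k}" by auto
  show "card {i. i < length xs \<and> xs!i < y} \<le> k"
    using card_mono[OF _ sub] by simp
next
  assume h: "card {i. i < length xs \<and> xs!i < y} \<le> k"
  show "y \<le> xs!k"
  proof (rule ccontr)
    assume a: "\<not> y \<le> xs!k"
    have "xs!i < y" if "i < Suc k" for i
      using sorted_nth_mono[OF assms(1), of i k] that assms(2) a by simp
    then have sub: "{0..<Suc k} \<subseteq> {i. i < length xs \<and> xs!i < y}"
      using assms(2) by auto
    have "Suc k \<le> card {i. i < length xs \<and> xs!i < y}"
      using card_mono[OF _ sub] by simp
    then show False using h by simp
  qed
qed

lemma card_sorted_filter:
  fixes v :: "nat \<Rightarrow> real"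
  shows "card {i. i < length (sort (map v [1..<B+1])) \<and> P (sort (map v [1..<B+1]) ! i)}
         = card {b\<in>{1..B}. P (v b)}"
proof -
  have "card {i. i < length (sort (map v [1..<B+1])) \<and> P (sort (map v [1..<B+1]) ! i)}
      = length (filter P (sort (map v [1..<B+1])))"
    by (simp only: length_filter_conv_card)
  also have "\<dots> = length (filter P (map v [1..<B+1]))"
    by (metis filter_sort length_sort)
  also have "\<dots> = length (filter (P \<circ> v) [1..<B+1])" by (simp only: filter_map length_map)
  also have "\<dots> = card (set (filter (P \<circ> v) [1..<B+1]))"
    by (simp only: distinct_card distinct_filter distinct_upt)
  also have "set (filter (P \<circ> v) [1..<B+1]) = {b\<in>{1..B}. P (v b)}"
    by (simp only: set_filter set_upt) auto
  finally show ?thesis .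
qed

lemma ord_stat_le:
  "ord_stat B v k \<le> ereal y \<longleftrightarrow> (k = 0 \<or> (k \<le> B \<and> k \<le> card {b\<in>{1..B}. v b \<le> y}))"
proof -
  define xs where "xs = sort (map v [1..<B+1])"
  have len: "length xs = B" and srt: "sorted xs" unfolding xs_def by simp_all
  consider "k = 0" | "B + 1 \<le> k" | "0 < k \<and> k \<le> B" by linarith
  then show ?thesis
  proof cases
    case 3
    have kb: "k - 1 < length xs" using 3 len by auto
    have "ord_stat B v k = ereal (xs ! (k - 1))" unfolding ord_stat_def xs_def using 3 by simp
    moreover have "xs ! (k - 1) \<le> y \<longleftrightarrow> k \<le> card {b\<in>{1..B}. v b \<le> y}"
    proof -
      have "xs ! (k - 1) \<le> y \<longleftrightarrow> Suc (k-1) \<le> card {i. i < length xs \<and> xs!i \<le> y}"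
        using sorted_nth_le_iff[OF srt kb, of y] by simp
      also have "card {i. i < length xs \<and> xs!i \<le> y} = card {b\<in>{1..B}. v b \<le> y}"
        unfolding xs_def by (rule card_sorted_filter)
      finally show ?thesis using 3 by simp
    qed
    ultimately show ?thesis using 3 by simp
  next
    case 1 then show ?thesis unfolding ord_stat_def by simp
  next
    case 2 then show ?thesis unfolding ord_stat_def by simp
  qed
qed

lemma ord_stat_ge:
  "ereal y \<le> ord_stat B v k \<longleftrightarrow> (B + 1 \<le> k \<or> (k \<noteq> 0 \<and> card {b\<in>{1..B}. v b < y} < k))"
proof -
  define xs where "xs = sort (map v [1..<B+1])"
  have len: "length xs = B" and srt: "sorted xs" unfolding xs_def by simp_all
  consider "k = 0" | "B + 1 \<le> k" | "0 < k \<and> k \<le> B" by linarith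
  then show ?thesis
  proof cases
    case 3
    have kb: "k - 1 < length xs" using 3 len by auto
    have "ord_stat B v k = ereal (xs ! (k - 1))" unfolding ord_stat_def xs_def using 3 by simp
    moreover have "y \<le> xs ! (k - 1) \<longleftrightarrow> card {b\<in>{1..B}. v b < y} < k"
    proof -
      have "y \<le> xs ! (k - 1) \<longleftrightarrow> card {i. i < length xs \<and> xs!i < y} \<le> k - 1"
        using sorted_nth_ge_iff[OF srt kb, of y] by simp
      also have "card {i. i < length xs \<and> xs!i < y} = card {b\<in>{1..B}. v b < y}"
        unfolding xs_def by (rule card_sorted_filter)
      finally show ?thesis using 3 by auto
    qed
    ultimately show ?thesis using 3 by simp
  next
    case 1 then show ?thesis unfolding ord_stat_def by simp
  next
    case 2 then show ?thesis unfolding ord_stat_def by simp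
  qed
qed


lemma S_char:
  fixes qlo qhi glo ghi :: "'x \<Rightarrow> real"
  assumes g: "\<And>x. glo x > 0" "\<And>x. ghi x > 0" and cal: "n0 < n" and al: "\<alpha> < 1"
  shows "y \<in> uacqrS_set qlo qhi glo ghi n0 n \<alpha> xs ys x \<longleftrightarrow>
     real (card {i\<in>{n0<..n}. max ((qlo (xs i) - ys i) / glo (xs i)) ((ys i - qhi (xs i)) / ghi (xs i))
        < max ((qlo x - y) / glo x) ((y - qhi x) / ghi x)}) < (1-\<alpha>)*(real(n-n0)+1)"
  unfolding uacqrS_set_def
proof (rule conf_char[where sc = "\<lambda>x y. max ((qlo x - y) / glo x) ((y - qhi x) / ghi x)"])
  fix x y and t :: real
  have "(qlo x - t * glo x \<le> y) \<longleftrightarrow> (qlo x - y) / glo x \<le> t"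
    using g(1)[of x] by (simp add: pos_divide_le_eq algebra_simps)
  moreover have "(y \<le> qhi x + t * ghi x) \<longleftrightarrow> (y - qhi x) / ghi x \<le> t"
    using g(2)[of x] by (simp add: pos_divide_le_eq algebra_simps)
  ultimately show "(ereal (qlo x - t * glo x) \<le> ereal y \<and> ereal y \<le> ereal (qhi x + t * ghi x))
      \<longleftrightarrow> max ((qlo x - y) / glo x) ((y - qhi x) / ghi x) \<le> t"
    by simp
qed (use cal al in auto)

lemma P_char:
  fixes qblo qbhi :: "nat \<Rightarrow> 'x \<Rightarrow> real"
  assumes cal: "n0 < n" and al: "\<alpha> < 1"
  shows "y \<in> uacqrP_set B qblo qbhi n0 n \<alpha> xs ys x \<longleftrightarrow>
     real (card {i\<in>{n0<..n}.
        max (real B + 1 - real (card {b\<in>{1..B}. qblo b (xs i) \<le> ys i})) (real (card {b\<in>{1..B}. qbhi b (xs i) < ys i}) + 1)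
      < max (real B + 1 - real (card {b\<in>{1..B}. qblo b x \<le> y})) (real (card {b\<in>{1..B}. qbhi b x < y}) + 1)})
     < (1-\<alpha>)*(real(n-n0)+1)"
proof -
  define cL where "cL = (\<lambda>x y. card {b\<in>{1..B}. qblo b x \<le> y})"
  define cH where "cH = (\<lambda>x y. card {b\<in>{1..B}. qbhi b x < y})"
  define sc where "sc = (\<lambda>x y. max (B + 1 - cL x y) (Suc (cH x y)))"
  have cLB: "cL x y \<le> B" for x y
    unfolding cL_def by (rule order_trans[OF card_mono[of "{1..B}"]]) auto
  have cHB: "cH x y \<le> B" for x y
    unfolding cH_def by (rule order_trans[OF card_mono[of "{1..B}"]]) auto
  have scr: "real (sc x y) = max (real B + 1 - real (cL x y)) (real (cH x y) + 1)" for x y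
    unfolding sc_def using cLB[of x y] by (simp add: of_nat_diff)
  have "y \<in> uacqrP_set B qblo qbhi n0 n \<alpha> xs ys x \<longleftrightarrow>
     real (card {i\<in>{n0<..n}. sc (xs i) (ys i) < sc x y}) < (1-\<alpha>)*(real(n-n0)+1)"
    unfolding uacqrP_set_def
  proof (rule conf_char[where sc = sc])
    fix x y and t :: nat assume t: "t \<in> {0..B+1}"
    have eL: "card {b\<in>{1..B}. qblo b x \<le> y} = cL x y" by (simp add: cL_def)
    have eH: "card {b\<in>{1..B}. qbhi b x < y} = cH x y" by (simp add: cH_def)
    have lo: "ord_stat B (\<lambda>b. qblo b x) (B + 1 - t) \<le> ereal y \<longleftrightarrow> B + 1 - cL x y \<le> t"
      using ord_stat_le[of B "\<lambda>b. qblo b x" "B + 1 - t" y, unfolded eL] t cLB[of x y] by auto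
    have hi: "ereal y \<le> ord_stat B (\<lambda>b. qbhi b x) t \<longleftrightarrow> Suc (cH x y) \<le> t"
      using ord_stat_ge[of y B "\<lambda>b. qbhi b x" t, unfolded eH] t cHB[of x y] by auto
    show "(ord_stat B (\<lambda>b. qblo b x) (B + 1 - t) \<le> ereal y \<and> ereal y \<le> ord_stat B (\<lambda>b. qbhi b x) t)
        \<longleftrightarrow> sc x y \<le> t"
      unfolding lo hi sc_def by simp
  next
    fix x y show "sc x y \<in> {0..B+1}" unfolding sc_def using cHB[of x y] by auto
  next
    fix S :: "nat set" assume "S \<subseteq> {0..B+1}" "S \<noteq> {}"
    then show "Inf S \<in> {0..B+1}" using Inf_nat_def1 by blast
  qed (use cal al in auto)
  also have "{i\<in>{n0<..n}. sc (xs i) (ys i) < sc x y} = {i\<in>{n0<..n}.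
        max (real B + 1 - real (card {b\<in>{1..B}. qblo b (xs i) \<le> ys i})) (real (card {b\<in>{1..B}. qbhi b (xs i) < ys i}) + 1)
      < max (real B + 1 - real (card {b\<in>{1..B}. qblo b x \<le> y})) (real (card {b\<in>{1..B}. qbhi b x < y}) + 1)}"
  proof -
    have lt: "sc a b < sc x y \<longleftrightarrow> max (real B + 1 - real (cL a b)) (real (cH a b) + 1)
        < max (real B + 1 - real (cL x y)) (real (cH x y) + 1)" for a b
      unfolding scr[symmetric] by simp
    show ?thesis by (simp only: lt cL_def cH_def)
  qed
  finally show ?thesis .
qed



lemma conformal_core:
  fixes M :: "'w measure" and MX :: "'x measure" and MU :: "'u measure"
    and X :: "nat \<Rightarrow> 'w \<Rightarrow> 'x" and Y :: "nat \<Rightarrow> 'w \<Rightarrow> real" and U :: "'w \<Rightarrow> 'u"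
    and n n0 :: nat and \<alpha> :: real
    and G :: "(nat \<Rightarrow> 'x \<times> real) \<Rightarrow> 'u \<Rightarrow> 'x \<Rightarrow> real \<Rightarrow> real"
  assumes P: "prob_space M"
    and alpha: "0 < \<alpha>" "\<alpha> < 1"
    and split: "n0 < n"
    and X_meas: "\<forall>i\<in>{1..Suc n}. X i \<in> measurable M MX"
    and Y_meas: "\<forall>i\<in>{1..Suc n}. Y i \<in> borel_measurable M"
    and U_meas: "U \<in> measurable M MU"
    and exch: "\<forall>\<pi>. \<pi> permutes {1..Suc n} \<longrightarrow>
        distr M (PiM {1..Suc n} (\<lambda>_. MX \<Otimes>\<^sub>M borel))
          (\<lambda>\<omega>. \<lambda>i\<in>{1..Suc n}. (X (\<pi> i) \<omega>, Y (\<pi> i) \<omega>))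
        = distr M (PiM {1..Suc n} (\<lambda>_. MX \<Otimes>\<^sub>M borel))
          (\<lambda>\<omega>. \<lambda>i\<in>{1..Suc n}. (X i \<omega>, Y i \<omega>))"
    and U_indep: "distr M (PiM {1..Suc n} (\<lambda>_. MX \<Otimes>\<^sub>M borel) \<Otimes>\<^sub>M MU)
          (\<lambda>\<omega>. (\<lambda>i\<in>{1..Suc n}. (X i \<omega>, Y i \<omega>), U \<omega>))
        = distr M (PiM {1..Suc n} (\<lambda>_. MX \<Otimes>\<^sub>M borel)) (\<lambda>\<omega>. \<lambda>i\<in>{1..Suc n}. (X i \<omega>, Y i \<omega>))
          \<Otimes>\<^sub>M distr M MU U"
    and G_meas: "(\<lambda>(d, u, x, y). G d u x y) \<in> borel_measurable
        (PiM {1..n0} (\<lambda>_. MX \<Otimes>\<^sub>M borel) \<Otimes>\<^sub>M (MU \<Otimes>\<^sub>M (MX \<Otimes>\<^sub>M borel)))"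
  shows "1 - \<alpha> \<le> measure M {\<omega> \<in> space M.
     real (card {i\<in>{n0<..n}. G (\<lambda>i\<in>{1..n0}. (X i \<omega>, Y i \<omega>)) (U \<omega>) (X i \<omega>) (Y i \<omega>)
        < G (\<lambda>i\<in>{1..n0}. (X i \<omega>, Y i \<omega>)) (U \<omega>) (X (Suc n) \<omega>) (Y (Suc n) \<omega>)})
     < (1-\<alpha>)*(real(n-n0)+1)}"
proof -
  interpret prob_space M by (rule P)
  define I where "I = {1..Suc n}"
  define J where "J = {n0<..Suc n}"
  define Mz where "Mz = PiM I (\<lambda>_. MX \<Otimes>\<^sub>M (borel :: real measure))"
  define MD where "MD = PiM {1..n0} (\<lambda>_. MX \<Otimes>\<^sub>M (borel :: real measure))"
  define K where "K = (1-\<alpha>)*(real(n-n0)+1)"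
  define Zv where "Zv = (\<lambda>\<omega>. \<lambda>i\<in>I. (X i \<omega>, Y i \<omega>))"
  define s where "s = (\<lambda>i \<omega>. G (\<lambda>i\<in>{1..n0}. (X i \<omega>, Y i \<omega>)) (U \<omega>) (X i \<omega>) (Y i \<omega>))"
  define sf where "sf = (\<lambda>p i. G (restrict (fst p) {1..n0}) (snd p) (fst (fst p i)) (snd (fst p i)))"
  define Q where "Q = {p \<in> space (Mz \<Otimes>\<^sub>M MU). K \<le> real (card {i\<in>J. sf p i < sf p (Suc n)})}"
  define A where "A = (\<lambda>j. {\<omega>\<in>space M. K \<le> real (card {i\<in>J. s i \<omega> < s j \<omega>})})"
  define L where "L = distr M Mz Zv"
  define LU where "LU = distr M MU U"
  define N0 where "N0 = distr M (Mz \<Otimes>\<^sub>M MU) (\<lambda>\<omega>. (Zv \<omega>, U \<omega>))"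
  have JI: "J \<subseteq> I" unfolding I_def J_def by auto
  have finJ: "finite J" unfolding J_def by simp
  have cardJ: "card J = n - n0 + 1" unfolding J_def using split by simp
  have Kpos: "0 < K" unfolding K_def using alpha by simp
  have m0: "0 \<le> \<alpha> * (real (n-n0)+1)" using alpha by simp
  have KJ: "K \<le> real (card J)" unfolding K_def cardJ using m0 by (simp add: algebra_simps)
  have KJ': "real (card J) - K = \<alpha> * real (card J)" unfolding K_def cardJ by (simp add: algebra_simps)
  have Zv_meas: "Zv \<in> measurable M Mz"
    unfolding Zv_def Mz_def
    by (rule measurable_restrict) (use X_meas Y_meas I_def in \<open>auto intro!: measurable_Pair\<close>)
  have ZU_meas: "(\<lambda>\<omega>. (Zv \<omega>, U \<omega>)) \<in> measurable M (Mz \<Otimes>\<^sub>M MU)"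
    using Zv_meas U_meas by (rule measurable_Pair)
  have sf_meas: "(\<lambda>p. sf p i) \<in> borel_measurable (Mz \<Otimes>\<^sub>M MU)" if i: "i \<in> I" for i
  proof -
    have h1: "(\<lambda>p. restrict (fst p) {1..n0}) \<in> measurable (Mz \<Otimes>\<^sub>M MU) MD"
      unfolding Mz_def MD_def
      by (rule measurable_compose[OF measurable_fst measurable_restrict_subset]) (use split in \<open>auto simp: I_def\<close>)
    have h2: "(\<lambda>p. fst p i) \<in> measurable (Mz \<Otimes>\<^sub>M MU) (MX \<Otimes>\<^sub>M borel)"
      unfolding Mz_def
      by (rule measurable_compose[OF measurable_fst measurable_component_singleton[OF i]])
    have h3: "(\<lambda>p. (restrict (fst p) {1..n0}, snd p, fst (fst p i), snd (fst p i)))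
        \<in> measurable (Mz \<Otimes>\<^sub>M MU) (MD \<Otimes>\<^sub>M (MU \<Otimes>\<^sub>M (MX \<Otimes>\<^sub>M borel)))"
      using h1 h2 by (intro measurable_Pair) (auto intro: measurable_compose[OF _ measurable_fst] measurable_compose[OF _ measurable_snd])
    show ?thesis using measurable_compose[OF h3 G_meas[folded MD_def]] unfolding sf_def by (simp add: case_prod_beta)
  qed
  have Q_sets: "Q \<in> sets (Mz \<Otimes>\<^sub>M MU)"
  proof -
    have c: "(\<lambda>p. card {i\<in>J. sf p i < sf p (Suc n)}) \<in> measurable (Mz \<Otimes>\<^sub>M MU) (count_space UNIV)"
    proof (rule measurable_card)
      fix i
      show "{x \<in> space (Mz \<Otimes>\<^sub>M MU). i \<in> {i\<in>J. sf x i < sf x (Suc n)}} \<in> sets (Mz \<Otimes>\<^sub>M MU)"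
      proof (cases "i \<in> J")
        case True
        have [measurable]: "(\<lambda>p. sf p i) \<in> borel_measurable (Mz \<Otimes>\<^sub>M MU)" using True JI sf_meas by auto
        have [measurable]: "(\<lambda>p. sf p (Suc n)) \<in> borel_measurable (Mz \<Otimes>\<^sub>M MU)" using sf_meas I_def by auto
        show ?thesis using True by simp
      qed simp
    qed
    have "(\<lambda>p. real (card {i\<in>J. sf p i < sf p (Suc n)})) \<in> borel_measurable (Mz \<Otimes>\<^sub>M MU)"
      using c by (rule measurable_compose) simp
    then show ?thesis unfolding Q_def by measurable
  qed
  have AQ: "A j \<in> sets M \<and> measure M (A j) = measure N0 Q" if j: "j \<in> J" for j
  proof -
    define \<pi> where "\<pi> = Transposition.transpose j (Suc n)"
    have \<pi>I: "\<pi> permutes I" unfolding \<pi>_def using j JI by (intro permutes_swap_id) (auto simp: I_def)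
    have \<pi>J: "\<pi> permutes J" unfolding \<pi>_def using j by (intro permutes_swap_id) (auto simp: J_def)
    have \<pi>fix: "\<pi> i = i" if "i \<in> {1..n0}" for i
    proof -
      have "i \<noteq> j" "i \<noteq> Suc n" using that j split unfolding J_def by auto
      then show ?thesis unfolding \<pi>_def by (simp add: Transposition.transpose_def)
    qed
    define Zp where "Zp = (\<lambda>\<omega>. \<lambda>i\<in>I. (X (\<pi> i) \<omega>, Y (\<pi> i) \<omega>))"
    define perm where "perm = (\<lambda>z::nat \<Rightarrow> 'x \<times> real. \<lambda>i\<in>I. z (\<pi> i))"
    have \<pi>in: "\<pi> i \<in> I" if "i \<in> I" for i using \<pi>I that by (simp add: permutes_in_image)
    have perm_meas: "perm \<in> measurable Mz Mz"
      unfolding perm_def Mz_def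
      by (intro measurable_restrict measurable_component_singleton \<pi>in)
    have Zp_eq: "Zp \<omega> = perm (Zv \<omega>)" for \<omega>
      unfolding Zp_def perm_def Zv_def by (rule ext) (simp add: \<pi>in)
    have Zp_meas: "Zp \<in> measurable M Mz"
      unfolding Zp_eq[abs_def] by (rule measurable_compose[OF Zv_meas perm_meas])
    have \<pi>I': "\<pi> permutes {1..Suc n}" using \<pi>I by (simp add: I_def)
    have lawZp: "distr M Mz Zp = L"
      using exch[rule_format, OF \<pi>I'] unfolding Zp_def L_def Zv_def Mz_def I_def by simp
    have sfLU: "sigma_finite_measure (distr LU MU (\<lambda>x. x))"
      unfolding LU_def by (rule prob_space_imp_sigma_finite, rule prob_space.prob_space_distr)
        (auto intro: prob_space_distr U_meas measurable_ident_sets)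
    have LUid: "distr LU MU (\<lambda>x. x) = LU" unfolding LU_def by (rule distr_id2) simp
    have pmL: "perm \<in> measurable L Mz" unfolding L_def using perm_meas by simp
    have idLU: "(\<lambda>x. x) \<in> measurable LU MU" unfolding LU_def by simp
    have N0eq: "N0 = L \<Otimes>\<^sub>M LU" unfolding N0_def L_def LU_def Zv_def Mz_def I_def using U_indep by simp
    have pp_meas: "(\<lambda>(z, u). (perm z, u)) \<in> measurable (Mz \<Otimes>\<^sub>M MU) (Mz \<Otimes>\<^sub>M MU)"
      unfolding split_beta' by (intro measurable_Pair measurable_compose[OF measurable_fst perm_meas] measurable_snd)
    have law: "distr M (Mz \<Otimes>\<^sub>M MU) (\<lambda>\<omega>. (Zp \<omega>, U \<omega>)) = N0"
    proof -
      have "distr M (Mz \<Otimes>\<^sub>M MU) (\<lambda>\<omega>. (Zp \<omega>, U \<omega>))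
          = distr M (Mz \<Otimes>\<^sub>M MU) ((\<lambda>(z, u). (perm z, u)) \<circ> (\<lambda>\<omega>. (Zv \<omega>, U \<omega>)))"
        by (simp add: Zp_eq comp_def)
      also have "\<dots> = distr N0 (Mz \<Otimes>\<^sub>M MU) (\<lambda>(z, u). (perm z, u))"
        unfolding N0_def
        by (rule distr_distr[symmetric, OF pp_meas ZU_meas])
      also note N0eq
      also have "distr (L \<Otimes>\<^sub>M LU) (Mz \<Otimes>\<^sub>M MU) (\<lambda>(z, u). (perm z, u))
          = distr L Mz perm \<Otimes>\<^sub>M distr LU MU (\<lambda>x. x)"
        by (rule pair_measure_distr[symmetric, OF pmL idLU sfLU])
      also have "distr L Mz perm = L"
      proof -
        have pz: "perm \<circ> Zv = Zp" using Zp_eq by (auto simp: comp_def)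
        show ?thesis using lawZp unfolding L_def distr_distr[OF perm_meas Zv_meas] pz by simp
      qed
      also have "L \<Otimes>\<^sub>M distr LU MU (\<lambda>x. x) = N0"
        using N0eq by (simp only: LUid)
      finally show ?thesis .
    qed
    have ZpU_meas: "(\<lambda>\<omega>. (Zp \<omega>, U \<omega>)) \<in> measurable M (Mz \<Otimes>\<^sub>M MU)"
      using Zp_meas U_meas by (rule measurable_Pair)
    have sf_eq: "sf (Zp \<omega>, U \<omega>) i = s (\<pi> i) \<omega>" if "i \<in> I" for i \<omega>
    proof -
      have "restrict (Zp \<omega>) {1..n0} = (\<lambda>i\<in>{1..n0}. (X i \<omega>, Y i \<omega>))"
        unfolding Zp_def using \<pi>fix split by (auto intro!: ext simp: I_def)
      then show ?thesis unfolding sf_def s_def using that by (simp add: Zp_def)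
    qed
    have Suc_I: "Suc n \<in> I" unfolding I_def by simp
    have \<pi>n: "\<pi> (Suc n) = j" unfolding \<pi>_def by simp
    have card_eq: "card {i\<in>J. sf (Zp \<omega>, U \<omega>) i < sf (Zp \<omega>, U \<omega>) (Suc n)} = card {i\<in>J. s i \<omega> < s j \<omega>}" for \<omega>
    proof -
      have "{i\<in>J. sf (Zp \<omega>, U \<omega>) i < sf (Zp \<omega>, U \<omega>) (Suc n)} = {i\<in>J. s (\<pi> i) \<omega> < s j \<omega>}"
        using sf_eq JI Suc_I \<pi>n by auto
      also have "\<dots> = \<pi> ` {i\<in>J. s i \<omega> < s j \<omega>}"
      proof -
        have "\<pi> (\<pi> i) = i" for i unfolding \<pi>_def by simp
        moreover have "\<pi> i \<in> J \<longleftrightarrow> i \<in> J" for i using \<pi>J by (simp add: permutes_in_image)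
        ultimately show ?thesis by (auto intro: image_eqI) (metis (mono_tags, lifting) image_eqI mem_Collect_eq)
      qed
      also have "card \<dots> = card {i\<in>J. s i \<omega> < s j \<omega>}"
        by (rule card_image) (use inj_transpose in \<open>auto simp: \<pi>_def intro: inj_on_subset\<close>)
      finally show ?thesis .
    qed
    have Aeq: "A j = (\<lambda>\<omega>. (Zp \<omega>, U \<omega>)) -` Q \<inter> space M"
      unfolding A_def Q_def using card_eq measurable_space[OF ZpU_meas] by auto
    then have "measure M (A j) = measure (distr M (Mz \<Otimes>\<^sub>M MU) (\<lambda>\<omega>. (Zp \<omega>, U \<omega>))) Q"
      by (simp add: measure_distr[OF ZpU_meas Q_sets])
    moreover have "A j \<in> sets M" unfolding Aeq by (rule measurable_sets[OF ZpU_meas Q_sets])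
    ultimately show ?thesis using law by simp
  qed
  have Asub: "A j \<subseteq> space M" for j unfolding A_def by auto
  have sumA: "(\<Sum>j\<in>J. measure M (A j)) = real (card J) * measure N0 Q" using AQ by simp
  have int_eq: "(\<Sum>j\<in>J. measure M (A j)) = integral\<^sup>L M (\<lambda>\<omega>. \<Sum>j\<in>J. indicator (A j) \<omega>)"
  proof -
    have "integral\<^sup>L M (\<lambda>\<omega>. \<Sum>j\<in>J. indicator (A j) \<omega> :: real) = (\<Sum>j\<in>J. integral\<^sup>L M (indicator (A j)))"
      by (rule Bochner_Integration.integral_sum) (use AQ in \<open>auto intro!: integrable_real_indicator simp: emeasure_eq_measure\<close>)
    also have "\<dots> = (\<Sum>j\<in>J. measure M (A j))"
      using Asub by (simp add: Int_absorb2)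
    finally show ?thesis by simp
  qed
  have pt: "(\<Sum>j\<in>J. indicator (A j) \<omega>) \<le> real (card J) - K" if w: "\<omega> \<in> space M" for \<omega>
  proof -
    have "(\<Sum>j\<in>J. indicator (A j) \<omega> :: real) = (\<Sum>j\<in>J. of_bool (\<omega> \<in> A j))"
      by (simp add: indicator_def)
    also have "\<dots> = real (card (J \<inter> {j. \<omega> \<in> A j}))" using finJ by simp
    also have "J \<inter> {j. \<omega> \<in> A j} = {j\<in>J. K \<le> real (card {i\<in>J. s i \<omega> < s j \<omega>})}"
      using w unfolding A_def by auto
    finally show ?thesis using count_bound[OF finJ Kpos KJ, of "\<lambda>i. s i \<omega>"] by simp
  qed
  have "integral\<^sup>L M (\<lambda>\<omega>. \<Sum>j\<in>J. indicator (A j) \<omega>) \<le> integral\<^sup>L M (\<lambda>\<omega>. real (card J) - K)"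
    by (rule integral_mono) (use pt AQ in \<open>auto intro!: integrable_real_indicator simp: emeasure_eq_measure\<close>)
  also have "\<dots> = real (card J) - K" by (simp add: prob_space)
  finally have "real (card J) * measure N0 Q \<le> \<alpha> * real (card J)" using sumA int_eq KJ' by simp
  moreover have "0 < real (card J)" using cardJ by simp
  ultimately have mQ: "measure N0 Q \<le> \<alpha>" by (simp add: mult.commute)
  have SucJ: "Suc n \<in> J" unfolding J_def using split by simp
  have "{\<omega> \<in> space M.
     real (card {i\<in>{n0<..n}. G (\<lambda>i\<in>{1..n0}. (X i \<omega>, Y i \<omega>)) (U \<omega>) (X i \<omega>) (Y i \<omega>)
        < G (\<lambda>i\<in>{1..n0}. (X i \<omega>, Y i \<omega>)) (U \<omega>) (X (Suc n) \<omega>) (Y (Suc n) \<omega>)})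
     < (1-\<alpha>)*(real(n-n0)+1)} = space M - A (Suc n)"
  proof -
    have "{i\<in>J. s i \<omega> < s (Suc n) \<omega>} = {i\<in>{n0<..n}. s i \<omega> < s (Suc n) \<omega>}" for \<omega>
      unfolding J_def by (auto simp: le_Suc_eq)
    then show ?thesis unfolding A_def K_def s_def by auto
  qed
  moreover have "prob (space M - A (Suc n)) = 1 - prob (A (Suc n))"
    using AQ[OF SucJ] by (intro prob_compl) simp
  ultimately show ?thesis using AQ[OF SucJ] mQ by simp
qed



lemma card_le_meas:
  fixes f :: "nat \<Rightarrow> 'a \<Rightarrow> real"
  assumes f: "\<And>b. b \<in> A \<Longrightarrow> f b \<in> borel_measurable N" and g: "g \<in> borel_measurable N"
  shows "(\<lambda>p. real (card {b\<in>A. f b p \<le> g p})) \<in> borel_measurable N"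
proof -
  have "(\<lambda>p. card {b\<in>A. f b p \<le> g p}) \<in> measurable N (count_space UNIV)"
  proof (rule measurable_card)
    fix b
    show "{p \<in> space N. b \<in> {b\<in>A. f b p \<le> g p}} \<in> sets N"
    proof (cases "b \<in> A")
      case True
      have "{p \<in> space N. b \<in> {b\<in>A. f b p \<le> g p}} = {p \<in> space N. f b p \<le> g p}" using True by auto
      then show ?thesis using borel_measurable_le[OF f[OF True] g] by (simp only:)
    next
      case False
      then have "{p \<in> space N. b \<in> {b\<in>A. f b p \<le> g p}} = {}" by auto
      then show ?thesis by (simp only: sets.empty_sets)
    qed
  qed
  then show ?thesis by (rule measurable_compose) (rule borel_measurable_count_space)
qed

lemma card_less_meas:
  fixes f :: "nat \<Rightarrow> 'a \<Rightarrow> real"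
  assumes f: "\<And>b. b \<in> A \<Longrightarrow> f b \<in> borel_measurable N" and g: "g \<in> borel_measurable N"
  shows "(\<lambda>p. real (card {b\<in>A. f b p < g p})) \<in> borel_measurable N"
proof -
  have "(\<lambda>p. card {b\<in>A. f b p < g p}) \<in> measurable N (count_space UNIV)"
  proof (rule measurable_card)
    fix b
    show "{p \<in> space N. b \<in> {b\<in>A. f b p < g p}} \<in> sets N"
    proof (cases "b \<in> A")
      case True
      have "{p \<in> space N. b \<in> {b\<in>A. f b p < g p}} = {p \<in> space N. f b p < g p}" using True by auto
      then show ?thesis using borel_measurable_less[OF f[OF True] g] by (simp only:)
    next
      case False
      then have "{p \<in> space N. b \<in> {b\<in>A. f b p < g p}} = {}" by auto
      then show ?thesis by (simp only: sets.empty_sets)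
    qed
  qed
  then show ?thesis by (rule measurable_compose) (rule borel_measurable_count_space)
qed

theorem theorem1:
  fixes M :: "'w measure" and MX :: "'x measure" and MU :: "'u measure"
    and X :: "nat \<Rightarrow> 'w \<Rightarrow> 'x" and Y :: "nat \<Rightarrow> 'w \<Rightarrow> real" and U :: "'w \<Rightarrow> 'u"
    and n n0 :: nat and \<alpha> \<alpha>lo \<alpha>hi :: real
    and qhat :: "(nat \<Rightarrow> 'x \<times> real) \<Rightarrow> 'u \<Rightarrow> 'x \<Rightarrow> real \<Rightarrow> real"
    and glo ghi :: "(nat \<Rightarrow> 'x \<times> real) \<Rightarrow> 'u \<Rightarrow> 'x \<Rightarrow> real"
    and B :: nat
    and qb :: "nat \<Rightarrow> (nat \<Rightarrow> 'x \<times> real) \<Rightarrow> 'u \<Rightarrow> 'x \<Rightarrow> real \<Rightarrow> real"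
  assumes P: "prob_space M"
    and alpha: "0 < \<alpha>" "\<alpha> < 1"
    and alo: "0 < \<alpha>lo" "\<alpha>lo < 1" and ahi: "0 < \<alpha>hi" "\<alpha>hi < 1"
    and split: "n0 < n"
    and X_meas: "\<forall>i\<in>{1..Suc n}. X i \<in> measurable M MX"
    and Y_meas: "\<forall>i\<in>{1..Suc n}. Y i \<in> borel_measurable M"
    and U_meas: "U \<in> measurable M MU"
    and exch: "\<forall>\<pi>. \<pi> permutes {1..Suc n} \<longrightarrow>
        distr M (PiM {1..Suc n} (\<lambda>_. MX \<Otimes>\<^sub>M borel))
          (\<lambda>\<omega>. \<lambda>i\<in>{1..Suc n}. (X (\<pi> i) \<omega>, Y (\<pi> i) \<omega>))
        = distr M (PiM {1..Suc n} (\<lambda>_. MX \<Otimes>\<^sub>M borel))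
          (\<lambda>\<omega>. \<lambda>i\<in>{1..Suc n}. (X i \<omega>, Y i \<omega>))"
    and U_indep: "distr M (PiM {1..Suc n} (\<lambda>_. MX \<Otimes>\<^sub>M borel) \<Otimes>\<^sub>M MU)
          (\<lambda>\<omega>. (\<lambda>i\<in>{1..Suc n}. (X i \<omega>, Y i \<omega>), U \<omega>))
        = distr M (PiM {1..Suc n} (\<lambda>_. MX \<Otimes>\<^sub>M borel)) (\<lambda>\<omega>. \<lambda>i\<in>{1..Suc n}. (X i \<omega>, Y i \<omega>))
          \<Otimes>\<^sub>M distr M MU U"
    and q_meas: "\<forall>a. (\<lambda>(d, u, x). qhat d u x a) \<in> borel_measurable
        (PiM {1..n0} (\<lambda>_. MX \<Otimes>\<^sub>M borel) \<Otimes>\<^sub>M (MU \<Otimes>\<^sub>M MX))"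
    and glo_meas: "(\<lambda>(d, u, x). glo d u x) \<in> borel_measurable
        (PiM {1..n0} (\<lambda>_. MX \<Otimes>\<^sub>M borel) \<Otimes>\<^sub>M (MU \<Otimes>\<^sub>M MX))"
    and ghi_meas: "(\<lambda>(d, u, x). ghi d u x) \<in> borel_measurable
        (PiM {1..n0} (\<lambda>_. MX \<Otimes>\<^sub>M borel) \<Otimes>\<^sub>M (MU \<Otimes>\<^sub>M MX))"
    and g_pos: "\<forall>d u x. glo d u x > 0 \<and> ghi d u x > 0"
    and qb_meas: "\<forall>b\<in>{1..B}. \<forall>a. (\<lambda>(d, u, x). qb b d u x a) \<in> borel_measurable
        (PiM {1..n0} (\<lambda>_. MX \<Otimes>\<^sub>M borel) \<Otimes>\<^sub>M (MU \<Otimes>\<^sub>M MX))"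
  shows
    "measure M {\<omega> \<in> space M. Y (Suc n) \<omega> \<in>
        uacqrS_set
          (\<lambda>x. qhat (\<lambda>i\<in>{1..n0}. (X i \<omega>, Y i \<omega>)) (U \<omega>) x \<alpha>lo)
          (\<lambda>x. qhat (\<lambda>i\<in>{1..n0}. (X i \<omega>, Y i \<omega>)) (U \<omega>) x \<alpha>hi)
          (\<lambda>x. glo (\<lambda>i\<in>{1..n0}. (X i \<omega>, Y i \<omega>)) (U \<omega>) x)
          (\<lambda>x. ghi (\<lambda>i\<in>{1..n0}. (X i \<omega>, Y i \<omega>)) (U \<omega>) x)
          n0 n \<alpha> (\<lambda>i. X i \<omega>) (\<lambda>i. Y i \<omega>) (X (Suc n) \<omega>)} \<ge> 1 - \<alpha>
     \<and> measure M {\<omega> \<in> space M. Y (Suc n) \<omega> \<in>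
        uacqrP_set B
          (\<lambda>b x. qb b (\<lambda>i\<in>{1..n0}. (X i \<omega>, Y i \<omega>)) (U \<omega>) x \<alpha>lo)
          (\<lambda>b x. qb b (\<lambda>i\<in>{1..n0}. (X i \<omega>, Y i \<omega>)) (U \<omega>) x \<alpha>hi)
          n0 n \<alpha> (\<lambda>i. X i \<omega>) (\<lambda>i. Y i \<omega>) (X (Suc n) \<omega>)} \<ge> 1 - \<alpha>"
  proof -
  define GS where "GS = (\<lambda>d u x y. max ((qhat d u x \<alpha>lo - y) / glo d u x) ((y - qhat d u x \<alpha>hi) / ghi d u x))"
  define GP where "GP = (\<lambda>d u x y. max (real B + 1 - real (card {b\<in>{1..B}. qb b d u x \<alpha>lo \<le> y}))
      (real (card {b\<in>{1..B}. qb b d u x \<alpha>hi < y}) + 1))"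
  define Big where "Big = PiM {1..n0} (\<lambda>_. MX \<Otimes>\<^sub>M (borel::real measure)) \<Otimes>\<^sub>M (MU \<Otimes>\<^sub>M (MX \<Otimes>\<^sub>M (borel::real measure)))"
  have h: "(\<lambda>p. (fst p, fst (snd p), fst (snd (snd p)))) \<in> measurable Big (PiM {1..n0} (\<lambda>_. MX \<Otimes>\<^sub>M borel) \<Otimes>\<^sub>M (MU \<Otimes>\<^sub>M MX))"
    unfolding Big_def by measurable
  have yM: "(\<lambda>p. snd (snd (snd p))) \<in> borel_measurable Big" unfolding Big_def by measurable
  have qM: "(\<lambda>p. qhat (fst p) (fst (snd p)) (fst (snd (snd p))) a) \<in> borel_measurable Big" for a
    using measurable_compose[OF h q_meas[rule_format, of a]] by (simp add: split_beta)
  have gloM: "(\<lambda>p. glo (fst p) (fst (snd p)) (fst (snd (snd p)))) \<in> borel_measurable Big"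
    using measurable_compose[OF h glo_meas] by (simp add: split_beta)
  have ghiM: "(\<lambda>p. ghi (fst p) (fst (snd p)) (fst (snd (snd p)))) \<in> borel_measurable Big"
    using measurable_compose[OF h ghi_meas] by (simp add: split_beta)
  have qbM: "(\<lambda>p. qb b (fst p) (fst (snd p)) (fst (snd (snd p))) a) \<in> borel_measurable Big" if "b \<in> {1..B}" for a b
    using measurable_compose[OF h qb_meas[rule_format, OF that, of a]] by (simp add: split_beta)
  have cLM: "(\<lambda>p. real (card {b\<in>{1..B}. qb b (fst p) (fst (snd p)) (fst (snd (snd p))) \<alpha>lo \<le> snd (snd (snd p))}))
      \<in> borel_measurable Big"
    by (rule card_le_meas[OF qbM yM])
  have cHM: "(\<lambda>p. real (card {b\<in>{1..B}. qb b (fst p) (fst (snd p)) (fst (snd (snd p))) \<alpha>hi < snd (snd (snd p))}))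
      \<in> borel_measurable Big"
    by (rule card_less_meas[OF qbM yM])
  have GS_meas: "(\<lambda>(d, u, x, y). GS d u x y) \<in> borel_measurable Big"
  proof -
    have "(\<lambda>p. GS (fst p) (fst (snd p)) (fst (snd (snd p))) (snd (snd (snd p)))) \<in> borel_measurable Big"
      unfolding GS_def by (intro borel_measurable_max borel_measurable_divide borel_measurable_diff qM gloM ghiM yM)
    moreover have "(\<lambda>(d, u, x, y). GS d u x y) = (\<lambda>p. GS (fst p) (fst (snd p)) (fst (snd (snd p))) (snd (snd (snd p))))"
      by (simp add: fun_eq_iff split_beta)
    ultimately show ?thesis by simp
  qed
  have GP_meas: "(\<lambda>(d, u, x, y). GP d u x y) \<in> borel_measurable Big"
  proof -
    have "(\<lambda>p. GP (fst p) (fst (snd p)) (fst (snd (snd p))) (snd (snd (snd p)))) \<in> borel_measurable Big"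
      unfolding GP_def by (intro borel_measurable_max borel_measurable_diff borel_measurable_add borel_measurable_const cLM cHM)
    moreover have "(\<lambda>(d, u, x, y). GP d u x y) = (\<lambda>p. GP (fst p) (fst (snd p)) (fst (snd (snd p))) (snd (snd (snd p))))"
      by (simp add: fun_eq_iff split_beta)
    ultimately show ?thesis by simp
  qed
  note c1 = conformal_core[OF P alpha split X_meas Y_meas U_meas exch U_indep GS_meas[unfolded Big_def]]
  note c2 = conformal_core[OF P alpha split X_meas Y_meas U_meas exch U_indep GP_meas[unfolded Big_def]]
  have gl: "\<And>d u x. glo d u x > 0" and gh: "\<And>d u x. ghi d u x > 0" using g_pos by auto
  show ?thesis
    apply (rule conjI)
     apply (rule order_trans[OF c1], rule eq_refl, rule arg_cong[where f="measure M"], rule Collect_cong, rule conj_cong[OF refl])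
     apply (subst S_char[OF gl gh split alpha(2)])
     apply (simp add: GS_def)
    apply (rule order_trans[OF c2], rule eq_refl, rule arg_cong[where f="measure M"], rule Collect_cong, rule conj_cong[OF refl])
    apply (subst P_char[OF split alpha(2)])
    apply (simp add: GP_def)
    done
qed

end
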